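(* Let $G=(V,E)$ be a finite graph, $p\in(0,1)$ and $q\in\mathbb N$, and let $\tilde P_{\rm HB}$ and $P_{\rm SB}$ be the transition matrices of the heat-bath and single-bond dynamics for the random-cluster model on $G$ with parameters $p$ and $q$. Then \[ \Bigl(1-p\bigl(1-\tfrac1q\bigr)\Bigr)\lambda(\tilde P_{\rm HB})\;\le\;\lambda(P_{\rm SB})\;\le\;\lambda(\tilde P_{\rm HB}). \]
   Context: Each edge $e$ has endvertices $e^{(1)},e^{(2)}$; for $A\subseteq E$, $c(A)$ is the number of connected components of $(V,A)$. RC measure $\mu(A)\propto(\tfrac{p}{1-p})^{|A|}q^{c(A)}$. Heat-bath dynamics: $\tilde P_{\rm HB}(A,B)=\frac1{|E|}\sum_{e\in E}h_e(A,B)$ where, writing "connected" for "$e^{(1)},e^{(2)}$ are connected in $(V,A\setminus\{e\})$", $h_e=p$ if $B=A\cup\{e\}$ and connected; $1-p$ if $B=A\setminus\{e\}$ and connected; $\frac{p}{p+q(1-p)}$ if $B=A\cup\{e\}$ and not connected; $\frac{q(1-p)}{p+q(1-p)}$ if $B=A\setminus\{e\}$ and not connected; $0$ otherwise. Single-bond dynamics: $P_{\rm SB}(A,B)=\frac1{|E|}\sum_e g_e(A,B)$ with the same cases but connectivity tested in $(V,A)$ and probabilities $p,\ 1-p,\ p/q,\ 1-p/q$ respectively. Both are reversible w.r.t. $\mu$. Spectral gap: $\lambda(P)=1-\max\{|\xi|:\xi\text{ eigenvalue of }P,\ \xi\neq1\}$. *)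

theory Defs
  imports "HOL-Analysis.Analysis"
begin

definition edge_rel :: "('e \<Rightarrow> 'v) \<Rightarrow> ('e \<Rightarrow> 'v) \<Rightarrow> 'e set \<Rightarrow> ('v \<times> 'v) set" where
  "edge_rel end1 end2 A = {(end1 e, end2 e) | e. e \<in> A} \<union> {(end2 e, end1 e) | e. e \<in> A}"

definition connected_in :: "('e \<Rightarrow> 'v) \<Rightarrow> ('e \<Rightarrow> 'v) \<Rightarrow> 'e set \<Rightarrow> 'v \<Rightarrow> 'v \<Rightarrow> bool" where
  "connected_in end1 end2 A u v \<longleftrightarrow> (u, v) \<in> (edge_rel end1 end2 A)\<^sup>*"

definition hb_local :: "('e \<Rightarrow> 'v) \<Rightarrow> ('e \<Rightarrow> 'v) \<Rightarrow> real \<Rightarrow> real \<Rightarrow> 'e \<Rightarrow> 'e set \<Rightarrow> 'e set \<Rightarrow> real" where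
  "hb_local end1 end2 p q e A B =
     (let c = connected_in end1 end2 (A - {e}) (end1 e) (end2 e) in
      if B = A \<union> {e} \<and> c then p
      else if B = A - {e} \<and> c then 1 - p
      else if B = A \<union> {e} \<and> \<not> c then p / (p + q * (1 - p))
      else if B = A - {e} \<and> \<not> c then q * (1 - p) / (p + q * (1 - p))
      else 0)"

definition sb_local :: "('e \<Rightarrow> 'v) \<Rightarrow> ('e \<Rightarrow> 'v) \<Rightarrow> real \<Rightarrow> real \<Rightarrow> 'e \<Rightarrow> 'e set \<Rightarrow> 'e set \<Rightarrow> real" where
  "sb_local end1 end2 p q e A B =
     (let c = connected_in end1 end2 A (end1 e) (end2 e) in
      if B = A \<union> {e} \<and> c then p
      else if B = A - {e} \<and> c then 1 - p
      else if B = A \<union> {e} \<and> \<not> c then p / q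
      else if B = A - {e} \<and> \<not> c then 1 - p / q
      else 0)"

definition P_HB :: "'e set \<Rightarrow> ('e \<Rightarrow> 'v) \<Rightarrow> ('e \<Rightarrow> 'v) \<Rightarrow> real \<Rightarrow> real \<Rightarrow> 'e set \<Rightarrow> 'e set \<Rightarrow> real" where
  "P_HB E end1 end2 p q A B = (\<Sum>e\<in>E. hb_local end1 end2 p q e A B) / real (card E)"

definition P_SB :: "'e set \<Rightarrow> ('e \<Rightarrow> 'v) \<Rightarrow> ('e \<Rightarrow> 'v) \<Rightarrow> real \<Rightarrow> real \<Rightarrow> 'e set \<Rightarrow> 'e set \<Rightarrow> real" where
  "P_SB E end1 end2 p q A B = (\<Sum>e\<in>E. sb_local end1 end2 p q e A B) / real (card E)"

definition is_eigenvalue :: "'e set \<Rightarrow> ('e set \<Rightarrow> 'e set \<Rightarrow> real) \<Rightarrow> complex \<Rightarrow> bool" where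
  "is_eigenvalue E P \<xi> \<longleftrightarrow>
     (\<exists>f :: 'e set \<Rightarrow> complex. (\<exists>B\<in>Pow E. f B \<noteq> 0) \<and>
        (\<forall>A\<in>Pow E. (\<Sum>B\<in>Pow E. complex_of_real (P A B) * f B) = \<xi> * f A))"

definition spectral_gap :: "'e set \<Rightarrow> ('e set \<Rightarrow> 'e set \<Rightarrow> real) \<Rightarrow> real" where
  "spectral_gap E P = 1 - Max {cmod \<xi> | \<xi>. is_eigenvalue E P \<xi> \<and> \<xi> \<noteq> 1}"

end

theory Submission
  imports Defs
begin

definition ip :: "'a set \<Rightarrow> ('a \<Rightarrow> real) \<Rightarrow> ('a \<Rightarrow> real) \<Rightarrow> ('a \<Rightarrow> real) \<Rightarrow> real" where
  "ip S w f g = (\<Sum>x\<in>S. w x * f x * g x)"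

definition app :: "'a set \<Rightarrow> ('a \<Rightarrow> 'a \<Rightarrow> real) \<Rightarrow> ('a \<Rightarrow> real) \<Rightarrow> 'a \<Rightarrow> real" where
  "app S P f = (\<lambda>x. \<Sum>y\<in>S. P x y * f y)"

lemma ip_sym: "ip S w f g = ip S w g f"
  unfolding ip_def by (simp add: mult_ac)

lemma ip_cong: "(\<And>x. x \<in> S \<Longrightarrow> f x = f' x) \<Longrightarrow> (\<And>x. x \<in> S \<Longrightarrow> g x = g' x) \<Longrightarrow> ip S w f g = ip S w f' g'"
  unfolding ip_def by (rule sum.cong) auto

lemma ip_add_left: "ip S w (\<lambda>x. f x + g x) h = ip S w f h + ip S w g h"
  unfolding ip_def by (simp add: algebra_simps sum.distrib)

lemma ip_diff_left: "ip S w (\<lambda>x. f x - g x) h = ip S w f h - ip S w g h"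
  unfolding ip_def by (simp add: algebra_simps sum_subtractf)

lemma ip_scale_left: "ip S w (\<lambda>x. c * f x) h = c * ip S w f h"
  unfolding ip_def by (simp add: algebra_simps sum_distrib_left)

lemma ip_scale_right0: "ip S w h (\<lambda>x. c * f x) = c * ip S w h f"
  unfolding ip_def by (simp add: algebra_simps sum_distrib_left)

lemma ip_sum_left: "ip S w (\<lambda>x. \<Sum>i\<in>I. c i * u i x) g = (\<Sum>i\<in>I. c i * ip S w (u i) g)"
  unfolding ip_def by (simp add: sum_distrib_left sum_distrib_right mult_ac sum.swap[of _ I S])

lemma ip_nonneg: "(\<And>x. x \<in> S \<Longrightarrow> w x > 0) \<Longrightarrow> ip S w f f \<ge> 0"
  unfolding ip_def by (rule sum_nonneg) (simp add: mult.assoc less_imp_le)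

lemma ip_zero_iff: "finite S \<Longrightarrow> (\<And>x. x \<in> S \<Longrightarrow> w x > 0) \<Longrightarrow> ip S w f f = 0 \<longleftrightarrow> (\<forall>x\<in>S. f x = 0)"
  unfolding ip_def
  apply (subst sum_nonneg_eq_0_iff)
    apply (auto simp: mult.assoc less_imp_le)
  by (metis less_irrefl)

lemma ip_pos_iff: "finite S \<Longrightarrow> (\<And>x. x \<in> S \<Longrightarrow> w x > 0) \<Longrightarrow> ip S w f f > 0 \<longleftrightarrow> (\<exists>x\<in>S. f x \<noteq> 0)"
  using ip_zero_iff[of S w f] ip_nonneg[of S w f] by force

locale rc =
  fixes S :: "'a set" and w :: "'a \<Rightarrow> real" and P :: "'a \<Rightarrow> 'a \<Rightarrow> real"
  assumes fin: "finite S"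
    and wpos: "\<And>x. x \<in> S \<Longrightarrow> w x > 0"
    and Pnn: "\<And>x y. x \<in> S \<Longrightarrow> y \<in> S \<Longrightarrow> P x y \<ge> 0"
    and rows: "\<And>x. x \<in> S \<Longrightarrow> (\<Sum>y\<in>S. P x y) = 1"
    and symm: "\<And>x y. x \<in> S \<Longrightarrow> y \<in> S \<Longrightarrow> w x * P x y = w y * P y x"
begin

lemma self_adj: "ip S w (app S P f) g = ip S w f (app S P g)"
proof -
  have "ip S w (app S P f) g = (\<Sum>x\<in>S. \<Sum>y\<in>S. w x * P x y * f y * g x)"
    unfolding ip_def app_def by (simp add: sum_distrib_left sum_distrib_right mult_ac)
  also have "\<dots> = (\<Sum>x\<in>S. \<Sum>y\<in>S. w y * P y x * f y * g x)"
    by (intro sum.cong refl) (simp add: symm)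
  also have "\<dots> = (\<Sum>y\<in>S. \<Sum>x\<in>S. w y * P y x * f y * g x)"
    by (rule sum.swap)
  also have "\<dots> = ip S w f (app S P g)"
    unfolding ip_def app_def by (simp add: sum_distrib_left sum_distrib_right mult_ac)
  finally show ?thesis .
qed

definition dir :: "('a \<Rightarrow> real) \<Rightarrow> real" where
  "dir f = ip S w f f - ip S w f (app S P f)"

lemma dir_formula: "dir f = (\<Sum>x\<in>S. \<Sum>y\<in>S. w x * P x y * (f x - f y)^2) / 2"
proof -
  have a: "(\<Sum>x\<in>S. \<Sum>y\<in>S. w x * P x y * (f x)^2) = ip S w f f"
    unfolding ip_def by (intro sum.cong refl) (simp add: sum_distrib_left[symmetric] sum_distrib_right[symmetric] rows power2_eq_square mult_ac)
  have b: "(\<Sum>x\<in>S. \<Sum>y\<in>S. w x * P x y * (f y)^2) = ip S w f f"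
  proof -
    have "(\<Sum>x\<in>S. \<Sum>y\<in>S. w x * P x y * (f y)^2) = (\<Sum>x\<in>S. \<Sum>y\<in>S. w y * P y x * (f y)^2)"
      by (intro sum.cong refl) (simp add: symm)
    also have "\<dots> = (\<Sum>y\<in>S. \<Sum>x\<in>S. w y * P y x * (f y)^2)" by (rule sum.swap)
    also have "\<dots> = ip S w f f"
      unfolding ip_def by (intro sum.cong refl) (simp add: sum_distrib_left[symmetric] sum_distrib_right[symmetric] rows power2_eq_square mult_ac)
    finally show ?thesis .
  qed
  have c: "(\<Sum>x\<in>S. \<Sum>y\<in>S. w x * P x y * (f x * f y)) = ip S w f (app S P f)"
    unfolding ip_def app_def by (simp add: sum_distrib_left mult_ac)
  have "(\<Sum>x\<in>S. \<Sum>y\<in>S. w x * P x y * (f x - f y)^2)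
     = (\<Sum>x\<in>S. \<Sum>y\<in>S. w x * P x y * (f x)^2) + (\<Sum>x\<in>S. \<Sum>y\<in>S. w x * P x y * (f y)^2)
       - 2 * (\<Sum>x\<in>S. \<Sum>y\<in>S. w x * P x y * (f x * f y))"
    by (simp add: sum.distrib[symmetric] sum_subtractf[symmetric] sum_distrib_left power2_diff algebra_simps)
  then show ?thesis unfolding dir_def using a b c by simp
qed

lemma dir_nonneg: "dir f \<ge> 0"
  unfolding dir_formula
  by (intro divide_nonneg_pos sum_nonneg mult_nonneg_nonneg) (auto simp: Pnn less_imp_le wpos)

lemma dir_zero_iff: "dir f = 0 \<longleftrightarrow> (\<forall>x\<in>S. app S P f x = f x)"
proof
  assume "dir f = 0"
  then have "(\<Sum>x\<in>S. \<Sum>y\<in>S. w x * P x y * (f x - f y)^2) = 0" by (simp add: dir_formula)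
  moreover have nn: "\<And>x y. x\<in>S \<Longrightarrow> y\<in>S \<Longrightarrow> 0 \<le> w x * P x y * (f x - f y)^2"
    by (simp add: Pnn wpos less_imp_le)
  ultimately have "\<forall>x\<in>S. (\<Sum>y\<in>S. w x * P x y * (f x - f y)^2) = 0"
    using fin by (subst (asm) sum_nonneg_eq_0_iff) (auto intro: sum_nonneg)
  then have z: "\<forall>x\<in>S. \<forall>y\<in>S. w x * P x y * (f x - f y)^2 = 0"
    using fin nn by (auto simp: sum_nonneg_eq_0_iff)
  show "\<forall>x\<in>S. app S P f x = f x"
  proof
    fix x assume x: "x \<in> S"
    have "app S P f x = (\<Sum>y\<in>S. P x y * f x)"
      unfolding app_def
    proof (intro sum.cong refl)
      fix y assume y: "y \<in> S"
      from z x y wpos[OF x] have "P x y = 0 \<or> f x = f y" by auto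
      then show "P x y * f y = P x y * f x" by auto
    qed
    also have "\<dots> = f x" using rows[OF x] by (simp add: sum_distrib_right[symmetric])
    finally show "app S P f x = f x" .
  qed
next
  assume "\<forall>x\<in>S. app S P f x = f x"
  then have "ip S w f (app S P f) = ip S w f f" by (intro ip_cong) auto
  then show "dir f = 0" by (simp add: dir_def)
qed

lemma cont_ip: "continuous_on UNIV (\<lambda>f::'a\<Rightarrow>real. ip S w f n)"
  unfolding ip_def by (intro continuous_intros continuous_on_product_coordinates)

lemma cont_Q: "continuous_on UNIV (\<lambda>f::'a\<Rightarrow>real. ip S w f (app S P f))"
  unfolding ip_def app_def by (intro continuous_intros continuous_on_product_coordinates)

lemma cont_ipff: "continuous_on UNIV (\<lambda>f::'a\<Rightarrow>real. ip S w f f)"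
  unfolding ip_def by (intro continuous_intros continuous_on_product_coordinates)

lemma abs_le_1_sq: "\<bar>t::real\<bar> \<le> 1 + t^2"
proof (cases "\<bar>t\<bar> \<le> 1")
  case True then show ?thesis by (simp add: add_increasing2)
next
  case False
  have "\<bar>t\<bar> * 1 \<le> \<bar>t\<bar> * \<bar>t\<bar>" using False by (intro mult_left_mono) auto
  also have "\<dots> = t^2" by (simp add: power2_eq_square abs_mult_self_eq)
  finally show ?thesis by simp
qed

lemma exists_max:
  fixes N :: "('a\<Rightarrow>real) set"
  assumes f0: "\<forall>n\<in>N. ip S w f0 n = 0" "ip S w f0 f0 > 0"
  shows "\<exists>g. (\<forall>n\<in>N. ip S w g n = 0) \<and> ip S w g g = 1 \<and>
           (\<forall>f. (\<forall>n\<in>N. ip S w f n = 0) \<longrightarrow> ip S w f f = 1 \<longrightarrow> ip S w f (app S P f) \<le> ip S w g (app S P g))"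
proof -
  define K where "K = {f. (\<forall>x. x \<notin> S \<longrightarrow> f x = 0) \<and> ip S w f f = 1 \<and> (\<forall>n\<in>N. ip S w f n = 0)}"
  define M where "M = 1 + (\<Sum>x\<in>S. 1 / w x)"
  define B where "B = PiE UNIV (\<lambda>x. if x \<in> S then {-M..M} else {0::real})"
  have "compactin (product_topology (\<lambda>_. euclidean) UNIV) B"
    unfolding B_def by (subst compactin_PiE) auto
  then have cB: "compact B" by (simp add: euclidean_product_topology)
  have KB: "K \<subseteq> B"
  proof
    fix f assume f: "f \<in> K"
    have "\<bar>f x\<bar> \<le> M" if x: "x \<in> S" for x
    proof -
      have "w x * f x * f x \<le> ip S w f f"
        unfolding ip_def using fin x
        by (intro member_le_sum) (auto simp: mult.assoc less_imp_le wpos)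
      then have "w x * (f x)^2 \<le> 1" using f by (simp add: K_def power2_eq_square mult.assoc)
      then have "(f x)^2 \<le> 1 / w x" using wpos[OF x] by (simp add: field_simps)
      also have "\<dots> \<le> (\<Sum>x\<in>S. 1 / w x)"
        using fin x by (intro member_le_sum) (auto simp: less_imp_le wpos)
      finally show ?thesis using abs_le_1_sq[of "f x"] unfolding M_def by linarith
    qed
    then have "\<forall>x\<in>S. -M \<le> f x \<and> f x \<le> M" using abs_le_D1 abs_le_D2 by fastforce
    then show "f \<in> B" using f unfolding B_def K_def by auto
  qed
  have "closed K"
  proof -
    have Keq: "K = (\<Inter>x\<in>-S. {f. f x = 0}) \<inter> {f. ip S w f f = 1} \<inter> (\<Inter>n\<in>N. {f. ip S w f n = 0})"
      unfolding K_def by auto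
    have c1: "closed {f::'a\<Rightarrow>real. f x = 0}" for x
      by (rule closed_Collect_eq[OF continuous_on_product_coordinates continuous_on_const])
    have c2: "closed {f. ip S w f f = 1}"
      by (rule closed_Collect_eq[OF cont_ipff continuous_on_const])
    have c3: "closed {f. ip S w f n = 0}" for n
      by (rule closed_Collect_eq[OF cont_ip continuous_on_const])
    have c4: "closed (\<Inter>x\<in>-S. {f::'a\<Rightarrow>real. f x = 0})" using c1 by (intro closed_INT) blast
    have c5: "closed (\<Inter>n\<in>N. {f. ip S w f n = 0})" using c3 by (intro closed_INT) blast
    show ?thesis unfolding Keq by (intro closed_Int c4 c5 c2)
  qed
  have BK: "B \<inter> K = K" using KB by blast
  have cK: "compact K" using compact_Int_closed[OF cB \<open>closed K\<close>] unfolding BK .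
  define g0 where "g0 = (\<lambda>x. if x \<in> S then f0 x / sqrt (ip S w f0 f0) else 0)"
  have "ip S w g0 g0 = ip S w (\<lambda>x. (1 / sqrt (ip S w f0 f0)) * f0 x) (\<lambda>x. (1 / sqrt (ip S w f0 f0)) * f0 x)"
    by (rule ip_cong) (auto simp: g0_def)
  also have "\<dots> = (1 / sqrt (ip S w f0 f0))^2 * ip S w f0 f0"
    unfolding ip_scale_left ip_scale_right0 by (simp add: power2_eq_square)
  also have "\<dots> = 1" using f0(2) by (simp add: power_divide)
  finally have "ip S w g0 g0 = 1" .
  moreover have "\<forall>n\<in>N. ip S w g0 n = 0"
  proof
    fix n assume "n \<in> N"
    have "ip S w g0 n = ip S w (\<lambda>x. (1 / sqrt (ip S w f0 f0)) * f0 x) n"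
      by (rule ip_cong) (auto simp: g0_def)
    also have "\<dots> = (1 / sqrt (ip S w f0 f0)) * ip S w f0 n" by (rule ip_scale_left)
    finally show "ip S w g0 n = 0" using f0(1) \<open>n \<in> N\<close> by simp
  qed
  ultimately have "g0 \<in> K" unfolding K_def g0_def by auto
  then have "K \<noteq> {}" by auto
  from continuous_attains_sup[OF cK this continuous_on_subset[OF cont_Q subset_UNIV]]
  obtain g where g: "g \<in> K" "\<forall>f\<in>K. ip S w f (app S P f) \<le> ip S w g (app S P g)" by blast
  show ?thesis
  proof (intro exI conjI allI impI)
    show "\<forall>n\<in>N. ip S w g n = 0" "ip S w g g = 1" using g(1) by (auto simp: K_def)
    fix f assume f: "\<forall>n\<in>N. ip S w f n = 0" "ip S w f f = 1"
    define f' where "f' = (\<lambda>x. if x \<in> S then f x else 0)"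
    have e1: "ip S w f' n = ip S w f n" for n by (rule ip_cong) (auto simp: f'_def)
    have e2: "ip S w f' f' = ip S w f f" by (rule ip_cong) (auto simp: f'_def)
    have e3: "app S P f' = app S P f" unfolding app_def f'_def by (auto intro!: sum.cong)
    have e4: "ip S w f' (app S P f') = ip S w f (app S P f)"
      unfolding e3 by (rule ip_cong) (auto simp: f'_def)
    have "f' \<in> K" using f e1 e2 unfolding K_def by (auto simp: f'_def)
    then show "ip S w f (app S P f) \<le> ip S w g (app S P g)" using g(2) e4 by auto
  qed
qed

end



context rc begin

lemma ip_add_right: "ip S w h (\<lambda>x. f x + g x) = ip S w h f + ip S w h g"
  using ip_add_left[of S w f g h] by (simp add: ip_sym)
lemma ip_diff_right: "ip S w h (\<lambda>x. f x - g x) = ip S w h f - ip S w h g"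
  using ip_diff_left[of S w f g h] by (simp add: ip_sym)
lemma ip_scale_right: "ip S w h (\<lambda>x. c * f x) = c * ip S w h f"
  using ip_scale_left[of S w c f h] by (simp add: ip_sym)
lemma app_add: "app S P (\<lambda>x. f x + g x) = (\<lambda>x. app S P f x + app S P g x)"
  unfolding app_def by (simp add: algebra_simps sum.distrib)
lemma app_diff: "app S P (\<lambda>x. f x - g x) = (\<lambda>x. app S P f x - app S P g x)"
  unfolding app_def by (simp add: algebra_simps sum_subtractf)
lemma app_scale: "app S P (\<lambda>x. c * f x) = (\<lambda>x. c * app S P f x)"
  unfolding app_def by (simp add: algebra_simps sum_distrib_left)

lemma quad_zero:
  fixes a b :: real
  assumes "\<And>t. t * a + t^2 * b \<le> 0"
  shows "a = 0"
proof (rule ccontr)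
  assume a: "a \<noteq> 0"
  define c where "c = \<bar>b\<bar> + 1"
  have c: "c > 0" "c + b \<ge> 1" unfolding c_def by auto
  define t where "t = a / c"
  have "t * a + t^2 * b = a^2 * (c + b) / c^2"
    unfolding t_def using c by (simp add: field_simps power2_eq_square)
  also have "\<dots> > 0" using a c by (intro divide_pos_pos mult_pos_pos) auto
  finally show False using assms[of t] by simp
qed

lemma ipz: "ip S w f f = 0 \<longleftrightarrow> (\<forall>x\<in>S. f x = 0)"
  using ip_zero_iff[of S w f] fin wpos by blast

lemma ipp: "ip S w f f > 0 \<longleftrightarrow> (\<exists>x\<in>S. f x \<noteq> 0)"
  using ip_pos_iff[of S w f] fin wpos by blast

lemma ipnn: "ip S w f f \<ge> 0"
  using ip_nonneg[of S w f] wpos by blast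

definition Nset :: "('a \<Rightarrow> real) set" where
  "Nset = {n. \<forall>x\<in>S. app S P n x = n x}"

definition cev :: "complex \<Rightarrow> bool" where
  "cev z \<longleftrightarrow> (\<exists>f::'a\<Rightarrow>complex. (\<exists>B\<in>S. f B \<noteq> 0) \<and>
        (\<forall>A\<in>S. (\<Sum>B\<in>S. complex_of_real (P A B) * f B) = z * f A))"

lemma ip_N: "n \<in> Nset \<Longrightarrow> ip S w (app S P f) n = ip S w f n"
  unfolding self_adj Nset_def by (rule ip_cong) auto

lemma ip_zero_left: "(\<And>x. x \<in> S \<Longrightarrow> f x = 0) \<Longrightarrow> ip S w f g = 0"
  unfolding ip_def by simp

lemma lagrange:
  assumes gW: "\<forall>n\<in>Nset. ip S w g n = 0" and g1: "ip S w g g = 1"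
    and gmax: "\<forall>f. (\<forall>n\<in>Nset. ip S w f n = 0) \<longrightarrow> ip S w f f = 1 \<longrightarrow> ip S w f (app S P f) \<le> ip S w g (app S P g)"
  defines "xi \<equiv> ip S w g (app S P g)"
  shows "\<forall>f. (\<forall>n\<in>Nset. ip S w f n = 0) \<longrightarrow> ip S w f (app S P f) \<le> xi * ip S w f f"
    and "\<forall>x\<in>S. app S P g x = xi * g x"
proof -
  show all: "\<forall>f. (\<forall>n\<in>Nset. ip S w f n = 0) \<longrightarrow> ip S w f (app S P f) \<le> xi * ip S w f f"
  proof (intro allI impI)
    fix f assume fW: "\<forall>n\<in>Nset. ip S w f n = 0"
    show "ip S w f (app S P f) \<le> xi * ip S w f f"
    proof (cases "ip S w f f = 0")
      case True
      then have "\<forall>x\<in>S. f x = 0" using ipz by blast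
      then show ?thesis using True by (simp add: ip_zero_left)
    next
      case False
      then have pos: "ip S w f f > 0" using ipnn[of f] by linarith
      define c where "c = 1 / sqrt (ip S w f f)"
      define h where "h = (\<lambda>x. c * f x)"
      have "ip S w h h = c^2 * ip S w f f"
        unfolding h_def by (simp add: ip_scale_left ip_scale_right power2_eq_square)
      also have "\<dots> = 1" using pos by (simp add: c_def power_divide)
      finally have h1: "ip S w h h = 1" .
      have hW: "\<forall>n\<in>Nset. ip S w h n = 0" using fW by (simp add: h_def ip_scale_left)
      have "ip S w h (app S P h) = c^2 * ip S w f (app S P f)"
        unfolding h_def app_scale by (simp add: ip_scale_left ip_scale_right power2_eq_square)
      then have "c^2 * ip S w f (app S P f) \<le> xi" using gmax hW h1 unfolding xi_def by metis
      then have "ip S w f (app S P f) / ip S w f f \<le> xi" using pos by (simp add: c_def power_divide)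
      then show ?thesis using pos by (simp add: divide_le_eq mult.commute)
    qed
  qed
  have orth2: "2 * (ip S w v (app S P g) - xi * ip S w v g) = 0" if vW: "\<forall>n\<in>Nset. ip S w v n = 0" for v
  proof (rule quad_zero)
    fix t :: real
    define f where "f = (\<lambda>x. g x + t * v x)"
    have fW: "\<forall>n\<in>Nset. ip S w f n = 0"
      using gW vW by (simp add: f_def ip_add_left ip_scale_left)
    have e1: "ip S w f (app S P f) = xi + 2 * t * ip S w v (app S P g) + t^2 * ip S w v (app S P v)"
    proof -
      have "ip S w g (app S P v) = ip S w v (app S P g)" by (metis self_adj ip_sym)
      then show ?thesis
        unfolding f_def app_add app_scale xi_def ip_add_left ip_add_right ip_scale_left ip_scale_right
        by (simp add: power2_eq_square algebra_simps)
    qed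
    have e2: "ip S w f f = 1 + 2 * t * ip S w v g + t^2 * ip S w v v"
      unfolding f_def ip_add_left ip_add_right ip_scale_left ip_scale_right using g1
      by (simp add: power2_eq_square algebra_simps ip_sym[of S w g v])
    have "ip S w f (app S P f) \<le> xi * ip S w f f" using all fW by blast
    then have "2 * t * (ip S w v (app S P g) - xi * ip S w v g) + t^2 * (ip S w v (app S P v) - xi * ip S w v v) \<le> 0"
      unfolding e1 e2 by (simp add: algebra_simps)
    then show "t * (2 * (ip S w v (app S P g) - xi * ip S w v g)) + t^2 * (ip S w v (app S P v) - xi * ip S w v v) \<le> 0"
      by (simp add: algebra_simps)
  qed
  have orth: "ip S w v (app S P g) - xi * ip S w v g = 0" if vW: "\<forall>n\<in>Nset. ip S w v n = 0" for v
    using orth2[OF vW] by simp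
  define v where "v = (\<lambda>x. app S P g x - xi * g x)"
  have vW: "\<forall>n\<in>Nset. ip S w v n = 0"
    using gW by (simp add: v_def ip_diff_left ip_scale_left ip_N)
  have "ip S w v v = 0"
    using orth[OF vW] by (simp add: v_def ip_diff_right ip_scale_right)
  then show "\<forall>x\<in>S. app S P g x = xi * g x"
    using ipz[of v] by (simp add: v_def)
qed


lemma cev_real:
  assumes "cev z"
  shows "\<exists>r g. z = complex_of_real r \<and> ip S w g g > 0 \<and> (\<forall>x\<in>S. app S P g x = r * g x)"
proof -
  from assms obtain f :: "'a \<Rightarrow> complex" where f0: "\<exists>B\<in>S. f B \<noteq> 0"
    and fe: "\<forall>A\<in>S. (\<Sum>B\<in>S. complex_of_real (P A B) * f B) = z * f A"
    unfolding cev_def by blast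
  define fr where "fr = (\<lambda>x. Re (f x))"
  define fi where "fi = (\<lambda>x. Im (f x))"
  define a where "a = Re z"
  define b where "b = Im z"
  have er: "app S P fr x = a * fr x - b * fi x" if x: "x \<in> S" for x
  proof -
    have "Re (\<Sum>B\<in>S. complex_of_real (P x B) * f B) = Re (z * f x)" using fe x by simp
    then show ?thesis unfolding app_def fr_def fi_def a_def b_def by (simp add: Re_sum)
  qed
  have ei: "app S P fi x = a * fi x + b * fr x" if x: "x \<in> S" for x
  proof -
    have "Im (\<Sum>B\<in>S. complex_of_real (P x B) * f B) = Im (z * f x)" using fe x by simp
    then show ?thesis unfolding app_def fr_def fi_def a_def b_def by (simp add: Im_sum algebra_simps)
  qed
  have pos: "ip S w fr fr + ip S w fi fi > 0"
  proof -
    from f0 obtain B where B: "B \<in> S" "f B \<noteq> 0" by blast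
    then have "fr B \<noteq> 0 \<or> fi B \<noteq> 0" unfolding fr_def fi_def using complex_eqI by force
    then have "ip S w fr fr > 0 \<or> ip S w fi fi > 0" using B(1) ipp by blast
    then show ?thesis using ipnn[of fr] ipnn[of fi] by linarith
  qed
  have c1: "ip S w fi (app S P fr) = a * ip S w fi fr - b * ip S w fi fi"
  proof -
    have "ip S w fi (app S P fr) = ip S w fi (\<lambda>x. a * fr x - b * fi x)"
      by (rule ip_cong) (auto simp: er)
    then show ?thesis by (simp add: ip_diff_right ip_scale_right)
  qed
  have c2: "ip S w fr (app S P fi) = a * ip S w fr fi + b * ip S w fr fr"
  proof -
    have "ip S w fr (app S P fi) = ip S w fr (\<lambda>x. a * fi x + b * fr x)"
      by (rule ip_cong) (auto simp: ei)
    then show ?thesis by (simp add: ip_add_right ip_scale_right)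
  qed
  have "ip S w fi (app S P fr) = ip S w fr (app S P fi)"
    by (metis self_adj ip_sym)
  then have "b * (ip S w fr fr + ip S w fi fi) = 0"
    using c1 c2 by (simp add: algebra_simps ip_sym[of S w fi fr])
  with pos have b0: "b = 0" by simp
  have z: "z = complex_of_real a" using b0 by (simp add: a_def b_def complex_eq_iff)
  show ?thesis
  proof (cases "ip S w fr fr > 0")
    case True
    then show ?thesis using z er b0 by (intro exI[of _ a] exI[of _ fr]) auto
  next
    case False
    then have "ip S w fi fi > 0" using pos ipnn[of fr] by linarith
    then show ?thesis using z ei b0 by (intro exI[of _ a] exI[of _ fi]) auto
  qed
qed

lemma real_cev:
  assumes "ip S w g g > 0" "\<forall>x\<in>S. app S P g x = r * g x"
  shows "cev (complex_of_real r)"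
  unfolding cev_def
proof (intro exI[of _ "\<lambda>x. complex_of_real (g x)"] conjI ballI)
  show "\<exists>B\<in>S. complex_of_real (g B) \<noteq> 0" using assms(1) ipp by auto
  fix A assume "A \<in> S"
  have "(\<Sum>B\<in>S. complex_of_real (P A B) * complex_of_real (g B)) = complex_of_real (app S P g A)"
    unfolding app_def by simp
  also have "\<dots> = complex_of_real r * complex_of_real (g A)" using assms(2) \<open>A \<in> S\<close> by simp
  finally show "(\<Sum>B\<in>S. complex_of_real (P A B) * complex_of_real (g B)) = complex_of_real r * complex_of_real (g A)" .
qed

lemma eig_orth:
  assumes "\<forall>x\<in>S. app S P u x = r * u x" "\<forall>x\<in>S. app S P v x = s * v x" "r \<noteq> s"
  shows "ip S w u v = 0"
proof -
  have "ip S w (app S P u) v = r * ip S w u v"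
    using ip_cong[of S "app S P u" "\<lambda>x. r * u x" v v w] assms(1) by (simp add: ip_scale_left)
  moreover have "ip S w u (app S P v) = s * ip S w u v"
    using ip_cong[of S u u "app S P v" "\<lambda>x. s * v x" w] assms(2) by (simp add: ip_scale_right)
  ultimately have "r * ip S w u v = s * ip S w u v" using self_adj[of u v] by argo
  then have "(r - s) * ip S w u v = 0" by (simp add: algebra_simps)
  then show ?thesis using assms(3) by simp
qed

definition RE :: "real set" where
  "RE = {r. \<exists>g. ip S w g g > 0 \<and> (\<forall>x\<in>S. app S P g x = r * g x)}"

lemma bessel:
  fixes u :: "real \<Rightarrow> 'a \<Rightarrow> real" and X :: "real set"
  assumes X: "finite X"
    and on: "\<And>r s. r \<in> X \<Longrightarrow> s \<in> X \<Longrightarrow> ip S w (u r) (u s) = (if r = s then 1 else 0)"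
  shows "(\<Sum>r\<in>X. (ip S w f (u r))^2) \<le> ip S w f f"
proof -
  define c where "c r = ip S w f (u r)" for r
  define U where "U = (\<lambda>y. \<Sum>r\<in>X. c r * u r y)"
  have UU: "ip S w U U = (\<Sum>r\<in>X. (c r)^2)"
  proof -
    have "ip S w U U = (\<Sum>r\<in>X. c r * ip S w (u r) U)" unfolding U_def by (rule ip_sum_left)
    also have "\<dots> = (\<Sum>r\<in>X. c r * (\<Sum>s\<in>X. c s * ip S w (u s) (u r)))"
    proof (intro sum.cong refl)
      fix r
      have "ip S w (u r) U = ip S w U (u r)" by (rule ip_sym)
      also have "\<dots> = (\<Sum>s\<in>X. c s * ip S w (u s) (u r))" unfolding U_def by (rule ip_sum_left)
      finally show "c r * ip S w (u r) U = c r * (\<Sum>s\<in>X. c s * ip S w (u s) (u r))" by simp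
    qed
    also have "\<dots> = (\<Sum>r\<in>X. c r * c r)"
    proof (intro sum.cong refl)
      fix r assume r: "r \<in> X"
      have "(\<Sum>s\<in>X. c s * ip S w (u s) (u r)) = (\<Sum>s\<in>X. if s = r then c s else 0)"
        by (intro sum.cong refl) (simp add: on r)
      also have "\<dots> = c r" using X r by simp
      finally show "c r * (\<Sum>s\<in>X. c s * ip S w (u s) (u r)) = c r * c r" by simp
    qed
    finally show ?thesis by (simp add: power2_eq_square)
  qed
  have fU: "ip S w f U = (\<Sum>r\<in>X. (c r)^2)"
  proof -
    have "ip S w f U = ip S w U f" by (rule ip_sym)
    also have "\<dots> = (\<Sum>r\<in>X. c r * ip S w (u r) f)" unfolding U_def by (rule ip_sum_left)
    also have "\<dots> = (\<Sum>r\<in>X. (c r)^2)"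
      by (intro sum.cong refl) (metis c_def ip_sym power2_eq_square)
    finally show ?thesis .
  qed
  have "0 \<le> ip S w (\<lambda>x. f x - U x) (\<lambda>x. f x - U x)" by (rule ipnn)
  also have "\<dots> = ip S w f f - 2 * ip S w f U + ip S w U U"
    unfolding ip_diff_left ip_diff_right by (simp add: ip_sym[of S w U f])
  finally show ?thesis using UU fU by (simp add: c_def)
qed


lemma delta_ip: "x \<in> S \<Longrightarrow> ip S w (\<lambda>y. if y = x then 1 else 0) f = w x * f x"
  unfolding ip_def by (simp add: if_distrib if_distribR fin cong: if_cong)

lemma RE_card:
  assumes X: "finite X" "X \<subseteq> RE"
  shows "card X \<le> card S"
proof -
  define g where "g r = (SOME g. ip S w g g > 0 \<and> (\<forall>x\<in>S. app S P g x = r * g x))" for r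
  have g: "ip S w (g r) (g r) > 0 \<and> (\<forall>x\<in>S. app S P (g r) x = r * g r x)" if "r \<in> X" for r
  proof -
    have "\<exists>g. ip S w g g > 0 \<and> (\<forall>x\<in>S. app S P g x = r * g x)" using X(2) that unfolding RE_def by blast
    from someI_ex[OF this] show ?thesis unfolding g_def .
  qed
  define u where "u r = (\<lambda>x. (1 / sqrt (ip S w (g r) (g r))) * g r x)" for r
  have u1: "ip S w (u r) (u r) = 1" if "r \<in> X" for r
  proof -
    have "ip S w (u r) (u r) = (1 / sqrt (ip S w (g r) (g r)))^2 * ip S w (g r) (g r)"
      unfolding u_def ip_scale_left ip_scale_right by (simp add: power2_eq_square)
    then show ?thesis using g[OF that] by (simp add: power_divide)
  qed
  have ue: "\<forall>x\<in>S. app S P (u r) x = r * u r x" if "r \<in> X" for r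
    using g[OF that] unfolding u_def app_scale by simp
  have on: "ip S w (u r) (u s) = (if r = s then 1 else 0)" if "r \<in> X" "s \<in> X" for r s
    using u1 eig_orth[OF ue[OF that(1)] ue[OF that(2)]] that by auto
  have px: "(\<Sum>r\<in>X. w x * (u r x)^2) \<le> 1" if x: "x \<in> S" for x
  proof -
    have "(\<Sum>r\<in>X. (ip S w (\<lambda>y. if y = x then 1 else 0) (u r))^2) \<le> ip S w (\<lambda>y. if y = x then 1 else 0) (\<lambda>y. if y = x then 1 else 0)"
      by (rule bessel[OF X(1) on])
    also have "\<dots> = w x" using delta_ip[OF x] by simp
    finally have "(\<Sum>r\<in>X. (w x * u r x)^2) \<le> w x" using delta_ip[OF x] by simp
    then have "w x * (\<Sum>r\<in>X. w x * (u r x)^2) \<le> w x * 1"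
      by (simp add: sum_distrib_left power2_eq_square mult_ac)
    then show ?thesis using wpos[OF x] by simp
  qed
  have "real (card X) = (\<Sum>r\<in>X. ip S w (u r) (u r))" using u1 by simp
  also have "\<dots> = (\<Sum>x\<in>S. \<Sum>r\<in>X. w x * (u r x)^2)"
    unfolding ip_def by (subst sum.swap) (simp add: power2_eq_square mult_ac)
  also have "\<dots> \<le> (\<Sum>x\<in>S. 1)" by (rule sum_mono) (rule px)
  also have "\<dots> = real (card S)" by simp
  finally show ?thesis by simp
qed

lemma RE_finite: "finite RE"
proof (rule ccontr)
  assume "infinite RE"
  then obtain X where "X \<subseteq> RE" "finite X" "card X = Suc (card S)"
    using infinite_arbitrarily_large by blast
  then show False using RE_card by fastforce
qed

theorem gen:
  assumes psd: "\<And>f. ip S w f (app S P f) \<ge> 0" and x0: "x0 \<in> S" "P x0 x0 \<noteq> 1"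
  shows "\<exists>xi. Max {cmod z | z. cev z \<and> z \<noteq> 1} = xi
     \<and> (\<exists>f. (\<forall>n\<in>Nset. ip S w f n = 0) \<and> ip S w f f > 0 \<and> ip S w f (app S P f) = xi * ip S w f f)
     \<and> (\<forall>f. (\<forall>n\<in>Nset. ip S w f n = 0) \<longrightarrow> ip S w f (app S P f) \<le> xi * ip S w f f)"
proof -
  define d where "d = (\<lambda>y. if y = x0 then 1 else 0::real)"
  define f0 where "f0 = (\<lambda>y. app S P d y - d y)"
  have "app S P d x0 = P x0 x0"
    unfolding app_def d_def using x0(1) fin by (simp add: if_distrib cong: if_cong)
  then have "f0 x0 \<noteq> 0" using x0(2) by (simp add: f0_def d_def)
  then have f0p: "ip S w f0 f0 > 0" using ipp x0(1) by blast
  have f0W: "\<forall>n\<in>Nset. ip S w f0 n = 0" unfolding f0_def by (simp add: ip_diff_left ip_N)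
  obtain g where gW: "\<forall>n\<in>Nset. ip S w g n = 0" and g1: "ip S w g g = 1"
    and gmax: "\<forall>f. (\<forall>n\<in>Nset. ip S w f n = 0) \<longrightarrow> ip S w f f = 1 \<longrightarrow> ip S w f (app S P f) \<le> ip S w g (app S P g)"
    using exists_max[OF f0W f0p] by blast
  define xi where "xi = ip S w g (app S P g)"
  note L = lagrange[OF gW g1 gmax, folded xi_def]
  have xi0: "xi \<ge> 0" unfolding xi_def by (rule psd)
  define Ev where "Ev = {cmod z | z. cev z \<and> z \<noteq> 1}"
  have inEv: "xi \<in> Ev"
  proof -
    have "cev (complex_of_real xi)" using real_cev[of g xi] g1 L(2) by simp
    moreover have "xi \<noteq> 1"
    proof
      assume "xi = 1"
      then have "g \<in> Nset" using L(2) by (simp add: Nset_def)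
      then have "ip S w g g = 0" using gW by blast
      then show False using g1 by simp
    qed
    ultimately show ?thesis unfolding Ev_def using xi0 by (intro CollectI exI[of _ "complex_of_real xi"]) auto
  qed
  have bound: "e \<le> xi" and inRE: "e \<in> abs ` RE" if "e \<in> Ev" for e
  proof -
    from that obtain z where z: "e = cmod z" "cev z" "z \<noteq> 1" unfolding Ev_def by blast
    from cev_real[OF z(2)] obtain r h where rh: "z = complex_of_real r" "ip S w h h > 0"
      "\<forall>x\<in>S. app S P h x = r * h x" by blast
    have r1: "r \<noteq> 1" using rh(1) z(3) by auto
    have ee: "e = \<bar>r\<bar>" using z(1) rh(1) by simp
    show "e \<in> abs ` RE" unfolding ee RE_def using rh by blast
    have hW: "\<forall>n\<in>Nset. ip S w h n = 0"
    proof
      fix n assume n: "n \<in> Nset"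
      have "ip S w (app S P h) n = r * ip S w h n"
        using ip_cong[of S "app S P h" "\<lambda>x. r * h x" n n w] rh(3) by (simp add: ip_scale_left)
      then have "r * ip S w h n = ip S w h n" using ip_N[OF n, of h] by simp
      then have "(r - 1) * ip S w h n = 0" by (simp add: algebra_simps)
      then show "ip S w h n = 0" using r1 by simp
    qed
    have Qh: "ip S w h (app S P h) = r * ip S w h h"
      using ip_cong[of S h h "app S P h" "\<lambda>x. r * h x" w] rh(3) by (simp add: ip_scale_right)
    have "r * ip S w h h \<ge> 0" using psd[of h] Qh by simp
    then have r0: "r \<ge> 0" using rh(2) by (simp add: zero_le_mult_iff)
    have "r * ip S w h h \<le> xi * ip S w h h" using L(1) hW Qh by metis
    then have "r \<le> xi" using rh(2) by simp
    then show "e \<le> xi" using ee r0 by simp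
  qed
  have "finite Ev" using inRE RE_finite by (meson finite_imageI finite_subset subsetI)
  then have "Max Ev = xi" using inEv bound by (intro Max_eqI) auto
  then show ?thesis unfolding Ev_def using gW g1 L(1) by (intro exI[of _ xi] conjI exI[of _ g]) (auto simp: xi_def)
qed

end



locale grf =
  fixes V :: "'v set" and E :: "'e set" and end1 end2 :: "'e \<Rightarrow> 'v"
  assumes finV: "finite V" and finE: "finite E" and Ene: "E \<noteq> {}"
    and ends: "\<forall>e\<in>E. end1 e \<in> V \<and> end2 e \<in> V"
begin

abbreviation cn where "cn A x y \<equiv> connected_in end1 end2 A x y"

lemma edge_rel_sym: "(x, y) \<in> edge_rel end1 end2 A \<Longrightarrow> (y, x) \<in> edge_rel end1 end2 A"
  unfolding edge_rel_def by blast

lemma cn_refl: "cn A x x"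
  unfolding connected_in_def by simp

lemma cn_trans: "cn A x y \<Longrightarrow> cn A y z \<Longrightarrow> cn A x z"
  unfolding connected_in_def by (rule rtrancl_trans)

lemma cn_sym: "cn A x y \<Longrightarrow> cn A y x"
  unfolding connected_in_def
proof (induction rule: rtrancl_induct)
  case base then show ?case by simp
next
  case (step y z)
  then show ?case using edge_rel_sym by (meson converse_rtrancl_into_rtrancl)
qed

lemma cn_edge: "e \<in> A \<Longrightarrow> cn A (end1 e) (end2 e)"
  unfolding connected_in_def edge_rel_def by (intro r_into_rtrancl) blast

lemma edge_rel_insert: "edge_rel end1 end2 (insert e A) = edge_rel end1 end2 A \<union> {(end1 e, end2 e), (end2 e, end1 e)}"
  unfolding edge_rel_def by blast

lemma cn_insert:
  "cn (insert e A) x y \<longleftrightarrow> cn A x y \<or> (cn A x (end1 e) \<and> cn A (end2 e) y) \<or> (cn A x (end2 e) \<and> cn A (end1 e) y)"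
  (is "?L \<longleftrightarrow> ?R")
proof
  assume ?L
  then have "(x, y) \<in> (edge_rel end1 end2 (insert e A))\<^sup>*" unfolding connected_in_def .
  then show ?R
  proof (induction rule: rtrancl_induct)
    case base then show ?case using cn_refl by blast
  next
    case (step y z)
    from step(2) consider "(y, z) \<in> edge_rel end1 end2 A" | "y = end1 e" "z = end2 e" | "y = end2 e" "z = end1 e"
      unfolding edge_rel_insert by blast
    then show ?case
    proof cases
      case 1
      then have "cn A y z" unfolding connected_in_def by simp
      then show ?thesis using step(3) cn_trans by blast
    next
      case 2
      then show ?thesis using step(3) cn_trans cn_sym cn_refl by metis
    next
      case 3
      then show ?thesis using step(3) cn_trans cn_sym cn_refl by metis
    qed
  qed
next
  have mono: "cn A a b \<Longrightarrow> cn (insert e A) a b" for a b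
    unfolding connected_in_def edge_rel_insert by (rule rtrancl_mono[THEN subsetD, rotated]) auto
  have ed: "cn (insert e A) (end1 e) (end2 e)" by (rule cn_edge) simp
  assume ?R
  then show ?L using mono ed cn_trans cn_sym by metis
qed

definition cls where "cls A x = {y\<in>V. cn A x y}"
definition ncomp where "ncomp A = card (cls A ` V)"

lemma cls_eq: "cn A x y \<Longrightarrow> cls A x = cls A y"
  unfolding cls_def using cn_trans cn_sym by blast

lemma cls_eq_iff: "y \<in> V \<Longrightarrow> cls A x = cls A y \<longleftrightarrow> cn A x y"
  using cls_eq[of A x y] unfolding cls_def using cn_refl by blast

lemma ncomp_conn:
  assumes "cn A (end1 e) (end2 e)"
  shows "ncomp (insert e A) = ncomp A"
proof -
  have "cn (insert e A) x y \<longleftrightarrow> cn A x y" for x y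
    unfolding cn_insert using assms cn_trans cn_sym by metis
  then show ?thesis unfolding ncomp_def cls_def by simp
qed

lemma ncomp_bridge:
  assumes e: "e \<in> E" and nc: "\<not> cn A (end1 e) (end2 e)"
  shows "ncomp A = Suc (ncomp (insert e A))"
proof -
  define u where "u = end1 e"
  define v where "v = end2 e"
  have uv: "u \<in> V" "v \<in> V" using ends e by (auto simp: u_def v_def)
  have nuv: "\<not> cn A u v" using nc by (simp add: u_def v_def)
  define cu where "cu = cls A u"
  define cv where "cv = cls A v"
  have c1: "cls (insert e A) x = cu \<union> cv" if "x \<in> V" "cn A x u \<or> cn A x v" for x
  proof -
    have "cn (insert e A) x y \<longleftrightarrow> cn A u y \<or> cn A v y" for y
      unfolding cn_insert using that(2) nuv cn_trans cn_sym unfolding u_def v_def by metis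
    then show ?thesis unfolding cu_def cv_def cls_def by auto
  qed
  have c2: "cls (insert e A) x = cls A x" if "x \<in> V" "\<not> cn A x u" "\<not> cn A x v" for x
  proof -
    have "cn (insert e A) x y \<longleftrightarrow> cn A x y" for y
      unfolding cn_insert using that(2,3) unfolding u_def v_def by metis
    then show ?thesis unfolding cls_def by auto
  qed
  define V0 where "V0 = {x\<in>V. \<not> cn A x u \<and> \<not> cn A x v}"
  have "cls (insert e A) ` V = insert (cu \<union> cv) (cls A ` V0)"
  proof
    show "cls (insert e A) ` V \<subseteq> insert (cu \<union> cv) (cls A ` V0)"
    proof
      fix X assume "X \<in> cls (insert e A) ` V"
      then obtain x where x: "x \<in> V" "X = cls (insert e A) x" by blast
      show "X \<in> insert (cu \<union> cv) (cls A ` V0)"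
      proof (cases "cn A x u \<or> cn A x v")
        case True then show ?thesis using c1 x by auto
      next
        case False then have "x \<in> V0" "X = cls A x" using c2 x unfolding V0_def by auto
        then show ?thesis by blast
      qed
    qed
    show "insert (cu \<union> cv) (cls A ` V0) \<subseteq> cls (insert e A) ` V"
    proof
      fix X assume "X \<in> insert (cu \<union> cv) (cls A ` V0)"
      then consider "X = cu \<union> cv" | x where "x \<in> V0" "X = cls A x" by blast
      then show "X \<in> cls (insert e A) ` V"
      proof cases
        case 1 then show ?thesis using c1[of u] uv cn_refl by (metis image_eqI)
      next
        case 2 then show ?thesis using c2[of x] unfolding V0_def by (metis (mono_tags, lifting) image_eqI mem_Collect_eq)
      qed
    qed
  qed
  moreover have "cls A ` V0 = cls A ` V - {cu, cv}"
  proof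
    show "cls A ` V0 \<subseteq> cls A ` V - {cu, cv}"
      unfolding V0_def cu_def cv_def using cls_eq_iff uv by auto
    show "cls A ` V - {cu, cv} \<subseteq> cls A ` V0"
    proof
      fix X assume X: "X \<in> cls A ` V - {cu, cv}"
      then obtain x where x: "x \<in> V" "X = cls A x" by blast
      have "\<not> cn A x u" "\<not> cn A x v" using X x cls_eq unfolding cu_def cv_def by auto
      then show "X \<in> cls A ` V0" using x unfolding V0_def by blast
    qed
  qed
  moreover have "cu \<union> cv \<notin> cls A ` V - {cu, cv}"
  proof
    assume "cu \<union> cv \<in> cls A ` V - {cu, cv}"
    then obtain y where y: "y \<in> V" "cu \<union> cv = cls A y" by blast
    have "u \<in> cls A y" "v \<in> cls A y" using y uv cn_refl unfolding cu_def cv_def cls_def by blast+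
    then have "cn A y u" "cn A y v" unfolding cls_def by auto
    then show False using nuv cn_trans cn_sym by blast
  qed
  moreover have "cu \<in> cls A ` V" "cv \<in> cls A ` V" "cu \<noteq> cv"
    using uv cls_eq_iff[of v A u] nuv unfolding cu_def cv_def by auto
  moreover have "finite (cls A ` V)" using finV by simp
  ultimately have "card (cls (insert e A) ` V) = Suc (card (cls A ` V) - 2)"
    by (simp add: card_insert_if card_Diff_subset)
  moreover have "card (cls A ` V) \<ge> 2"
  proof -
    have "{cu, cv} \<subseteq> cls A ` V" using \<open>cu \<in> _\<close> \<open>cv \<in> _\<close> by blast
    then have "card {cu, cv} \<le> card (cls A ` V)" using finV by (intro card_mono) auto
    then show ?thesis using \<open>cu \<noteq> cv\<close> by simp
  qed
  ultimately show ?thesis unfolding ncomp_def by simp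
qed


end

locale grf2 = grf +
  fixes p q :: real
  assumes p0: "0 < p" and p1: "p < 1" and q1: "1 \<le> q"
begin

definition al where "al e A = (if cn (A - {e}) (end1 e) (end2 e) then p else p / (p + q * (1 - p)))"
definition be where "be e A = (if cn A (end1 e) (end2 e) then p else p / q)"
definition pw where "pw A = (p / (1 - p)) ^ card A * q ^ ncomp A"
definition kH where "kH e A B = (if B = insert e A then al e A else 0) + (if B = A - {e} then 1 - al e A else 0)"
definition kG where "kG e A B = (if B = insert e A then be e A else 0) + (if B = A - {e} then 1 - be e A else 0)"
abbreviation H where "H \<equiv> P_HB E end1 end2 p q"
abbreviation G where "G \<equiv> P_SB E end1 end2 p q"

lemma qp: "q * (1 - p) > 0" using p1 q1 by (intro mult_pos_pos) auto
lemma Dpos: "p + q * (1 - p) > 0" using p0 qp by linarith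
lemma Dge1: "p + q * (1 - p) \<ge> 1"
proof -
  have "q * (1 - p) \<ge> 1 * (1 - p)" using q1 p1 by (intro mult_right_mono) auto
  then show ?thesis by simp
qed
lemma Dleq: "p + q * (1 - p) \<le> q"
proof -
  have "p * 1 \<le> p * q" using q1 p0 by (intro mult_left_mono) auto
  then show ?thesis by (simp add: algebra_simps)
qed

lemma al_bounds: "0 < al e A" "al e A < 1"
proof -
  have "p < p + q * (1 - p)" using qp by linarith
  then have "p / (p + q * (1 - p)) < 1" using Dpos by (simp add: divide_less_eq)
  then show "0 < al e A" "al e A < 1" unfolding al_def using p0 p1 Dpos by auto
qed

lemma be_bounds: "0 < be e A" "be e A \<le> 1"
proof -
  have "p / q \<le> 1" using p1 q1 by (simp add: divide_le_eq)
  moreover have "p / q > 0" using p0 q1 by simp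
  ultimately show "0 < be e A" "be e A \<le> 1" unfolding be_def using p0 p1 by auto
qed

lemma ins_ne_diff: "insert e A \<noteq> A - {e}" by auto

lemma hb_form: "hb_local end1 end2 p q e A B = kH e A B"
proof -
  have "q * (1 - p) / (p + q * (1 - p)) = ((p + q * (1 - p)) - p) / (p + q * (1 - p))"
    by simp
  also have "\<dots> = (p + q * (1 - p)) / (p + q * (1 - p)) - p / (p + q * (1 - p))"
    by (rule diff_divide_distrib)
  also have "(p + q * (1 - p)) / (p + q * (1 - p)) = 1" using Dpos by simp
  finally have "1 - p / (p + q * (1 - p)) = q * (1 - p) / (p + q * (1 - p))" by simp
  then show ?thesis unfolding hb_local_def kH_def al_def Let_def using ins_ne_diff[of e A]
    by (auto simp: Un_insert_right)
qed

lemma sb_form: "sb_local end1 end2 p q e A B = kG e A B"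
  unfolding sb_local_def kG_def be_def Let_def using ins_ne_diff[of e A]
  by (auto simp: Un_insert_right)

lemma H_eq: "H A B = (\<Sum>e\<in>E. kH e A B) / real (card E)"
  unfolding P_HB_def hb_form ..
lemma G_eq: "G A B = (\<Sum>e\<in>E. kG e A B) / real (card E)"
  unfolding P_SB_def sb_form ..

lemma pw_pos: "pw A > 0"
  unfolding pw_def using p0 p1 q1 by auto

lemma pw_ins:
  assumes "D \<subseteq> E" "e \<in> E" "e \<notin> D"
  shows "pw (insert e D) = pw D * (if cn D (end1 e) (end2 e) then p / (1 - p) else p / (q * (1 - p)))"
proof -
  have fD: "finite D" using assms(1) finE finite_subset by blast
  have c: "card (insert e D) = Suc (card D)" using fD assms(3) by simp
  show ?thesis
  proof (cases "cn D (end1 e) (end2 e)")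
    case True
    then show ?thesis unfolding pw_def c using ncomp_conn[OF True] by simp
  next
    case False
    then have "ncomp D = Suc (ncomp (insert e D))" using ncomp_bridge assms(2) by blast
    moreover have "p / (q * (1 - p)) = (p / (1 - p)) / q" by simp
    moreover have "q ^ Suc n * (x / q) = q ^ n * x" for n x using q1 by simp
    ultimately show ?thesis unfolding pw_def c using False q1 by (simp add: mult_ac)
  qed
qed

lemma pw_ins_al:
  assumes "D \<subseteq> E" "e \<in> E" "e \<notin> D"
  shows "pw (insert e D) = pw D * (al e D / (1 - al e D))"
proof -
  have "D - {e} = D" using assms(3) by simp
  moreover have "(p / (p + q * (1 - p))) / (1 - p / (p + q * (1 - p))) = p / (q * (1 - p))"
  proof -
    have "1 - p / (p + q * (1 - p)) = q * (1 - p) / (p + q * (1 - p))" using Dpos by (simp add: field_simps)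
    then show ?thesis using Dpos by simp
  qed
  moreover have "(p + q * (1 - p)) * (1 - p / (p + q * (1 - p))) = q * (1 - p)"
  proof -
    have "(p + q * (1 - p)) * (1 - p / (p + q * (1 - p))) = (p + q * (1 - p)) - (p + q * (1 - p)) * (p / (p + q * (1 - p)))"
      by (simp add: right_diff_distrib)
    also have "(p + q * (1 - p)) * (p / (p + q * (1 - p))) = p" using Dpos by simp
    finally show ?thesis by simp
  qed
  ultimately show ?thesis unfolding pw_ins[OF assms] al_def using Dpos by simp
qed

lemma kH_cases: "A \<noteq> B \<Longrightarrow> kH e A B \<noteq> 0 \<Longrightarrow> (B = insert e A \<and> e \<notin> A) \<or> (A = insert e B \<and> e \<notin> B)"
  unfolding kH_def by (auto split: if_splits)
lemma kG_cases: "A \<noteq> B \<Longrightarrow> kG e A B \<noteq> 0 \<Longrightarrow> (B = insert e A \<and> e \<notin> A) \<or> (A = insert e B \<and> e \<notin> B)"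
  unfolding kG_def by (auto split: if_splits)

lemma rev_H_edge:
  assumes A: "A \<subseteq> E" and B: "B \<subseteq> E" and e: "e \<in> E"
  shows "pw A * kH e A B = pw B * kH e B A"
proof -
  have main: "pw X * kH e X Y = pw Y * kH e Y X" if XY: "Y = insert e X" "e \<notin> X" "X \<subseteq> E" for X Y
  proof -
    have "kH e X Y = al e X" unfolding kH_def using XY by auto
    moreover have "kH e Y X = 1 - al e Y" unfolding kH_def using XY by auto
    moreover have "al e Y = al e X" unfolding al_def using XY by auto
    moreover have "1 - al e X \<noteq> 0" using al_bounds[of e X] by simp
    ultimately show ?thesis using pw_ins_al[OF XY(3) e XY(2)] XY(1) by simp
  qed
  show ?thesis
  proof (cases "A = B")
    case True then show ?thesis by simp
  next
    case False
    show ?thesis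
    proof (cases "kH e A B = 0 \<and> kH e B A = 0")
      case True then show ?thesis by simp
    next
      case nz: False
      then have "(B = insert e A \<and> e \<notin> A) \<or> (A = insert e B \<and> e \<notin> B)"
        using kH_cases[OF False] kH_cases[of B A e] False by metis
      then show ?thesis using main A B by (metis)
    qed
  qed
qed

lemma rev_G_edge:
  assumes A: "A \<subseteq> E" and B: "B \<subseteq> E" and e: "e \<in> E"
  shows "pw A * kG e A B = pw B * kG e B A"
proof -
  have main: "pw X * kG e X Y = pw Y * kG e Y X" if XY: "Y = insert e X" "e \<notin> X" "X \<subseteq> E" for X Y
  proof -
    have k1: "kG e X Y = be e X" unfolding kG_def using XY by auto
    have "be e Y = p" unfolding be_def using XY cn_edge[of e Y] by auto
    then have k2: "kG e Y X = 1 - p" unfolding kG_def using XY by auto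
    have pq: "q * (1 - p) \<noteq> 0" "1 - p \<noteq> 0" "q \<noteq> 0" using p1 q1 by auto
    show ?thesis
    proof (cases "cn X (end1 e) (end2 e)")
      case True
      then show ?thesis unfolding k1 k2 be_def pw_ins[OF XY(3) e XY(2), folded XY(1)] using pq by simp
    next
      case False
      then show ?thesis unfolding k1 k2 be_def pw_ins[OF XY(3) e XY(2), folded XY(1)] using pq by simp
    qed
  qed
  show ?thesis
  proof (cases "A = B")
    case True then show ?thesis by simp
  next
    case False
    show ?thesis
    proof (cases "kG e A B = 0 \<and> kG e B A = 0")
      case True then show ?thesis by simp
    next
      case nz: False
      then have "(B = insert e A \<and> e \<notin> A) \<or> (A = insert e B \<and> e \<notin> B)"
        using kG_cases[OF False] kG_cases[of B A e] False by metis
      then show ?thesis using main A B by (metis)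
    qed
  qed
qed

lemma row_k:
  assumes "A \<subseteq> E" "e \<in> E"
  shows "(\<Sum>B\<in>Pow E. kH e A B) = 1" "(\<Sum>B\<in>Pow E. kG e A B) = 1"
  using assms finE unfolding kH_def kG_def by (auto simp: sum.distrib)

lemma kH_nn: "kH e A B \<ge> 0" unfolding kH_def using al_bounds[of e A] by auto
lemma kG_nn: "kG e A B \<ge> 0" unfolding kG_def using be_bounds[of e A] by auto

lemma cardE: "real (card E) > 0" using finE Ene by (simp add: card_gt_0_iff)

lemma rc_H: "rc (Pow E) pw H"
proof
  show "finite (Pow E)" using finE by simp
  show "pw x > 0" for x by (rule pw_pos)
  show "H x y \<ge> 0" for x y unfolding H_eq using kH_nn cardE by (simp add: sum_nonneg)
  show "(\<Sum>y\<in>Pow E. H x y) = 1" if "x \<in> Pow E" for x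
  proof -
    have "(\<Sum>y\<in>Pow E. H x y) = (\<Sum>e\<in>E. \<Sum>y\<in>Pow E. kH e x y) / real (card E)"
      unfolding H_eq by (simp add: sum_divide_distrib[symmetric] sum.swap[of _ "Pow E"])
    also have "\<dots> = 1" using row_k(1) that cardE by simp
    finally show ?thesis .
  qed
  show "pw x * H x y = pw y * H y x" if "x \<in> Pow E" "y \<in> Pow E" for x y
    unfolding H_eq using rev_H_edge that by (simp add: sum_distrib_left)
qed

lemma rc_G: "rc (Pow E) pw G"
proof
  show "finite (Pow E)" using finE by simp
  show "pw x > 0" for x by (rule pw_pos)
  show "G x y \<ge> 0" for x y unfolding G_eq using kG_nn cardE by (simp add: sum_nonneg)
  show "(\<Sum>y\<in>Pow E. G x y) = 1" if "x \<in> Pow E" for x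
  proof -
    have "(\<Sum>y\<in>Pow E. G x y) = (\<Sum>e\<in>E. \<Sum>y\<in>Pow E. kG e x y) / real (card E)"
      unfolding G_eq by (simp add: sum_divide_distrib[symmetric] sum.swap[of _ "Pow E"])
    also have "\<dots> = 1" using row_k(2) that cardE by simp
    finally show ?thesis .
  qed
  show "pw x * G x y = pw y * G y x" if "x \<in> Pow E" "y \<in> Pow E" for x y
    unfolding G_eq using rev_G_edge that by (simp add: sum_distrib_left)
qed


lemma sum_ind:
  assumes "finite S" "X \<in> S"
  shows "(\<Sum>B\<in>S. (if B = X then c else 0) * f B) = c * (f X :: real)"
proof -
  have "(\<Sum>B\<in>S. (if B = X then c else 0) * f B) = (\<Sum>B\<in>S. if B = X then c * f X else 0)"
    by (intro sum.cong refl) auto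
  also have "\<dots> = c * f X" using assms by simp
  finally show ?thesis .
qed

lemma XkH:
  assumes "A \<subseteq> E" "e \<in> E"
  shows "(\<Sum>B\<in>Pow E. kH e A B * f B) = al e A * f (insert e A) + (1 - al e A) * f (A - {e})"
proof -
  have "(\<Sum>B\<in>Pow E. kH e A B * f B) = (\<Sum>B\<in>Pow E. (if B = insert e A then al e A else 0) * f B)
          + (\<Sum>B\<in>Pow E. (if B = A - {e} then 1 - al e A else 0) * f B)"
    unfolding kH_def distrib_right sum.distrib ..
  also have "\<dots> = al e A * f (insert e A) + (1 - al e A) * f (A - {e})"
  proof -
    have m: "insert e A \<in> Pow E" "A - {e} \<in> Pow E" using assms by auto
    have fP: "finite (Pow E)" using finE by simp
    show ?thesis using sum_ind[OF fP m(1), of "al e A" f] sum_ind[OF fP m(2), of "1 - al e A" f] by simp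
  qed
  finally show ?thesis .
qed

lemma Q_H_split:
  "ip (Pow E) pw f (app (Pow E) H f) =
     (\<Sum>e\<in>E. \<Sum>A\<in>Pow E. pw A * f A * (\<Sum>B\<in>Pow E. kH e A B * f B)) / real (card E)"
proof -
  have "ip (Pow E) pw f (app (Pow E) H f) = (\<Sum>A\<in>Pow E. \<Sum>B\<in>Pow E. \<Sum>e\<in>E. pw A * f A * kH e A B * f B / real (card E))"
    unfolding ip_def app_def H_eq
    by (simp add: sum_distrib_left sum_distrib_right sum_divide_distrib mult_ac)
  also have "\<dots> = (\<Sum>A\<in>Pow E. \<Sum>e\<in>E. \<Sum>B\<in>Pow E. pw A * f A * kH e A B * f B / real (card E))"
    by (intro sum.cong refl) (rule sum.swap)
  also have "\<dots> = (\<Sum>e\<in>E. \<Sum>A\<in>Pow E. \<Sum>B\<in>Pow E. pw A * f A * kH e A B * f B / real (card E))"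
    by (rule sum.swap)
  also have "\<dots> = (\<Sum>e\<in>E. \<Sum>A\<in>Pow E. pw A * f A * (\<Sum>B\<in>Pow E. kH e A B * f B)) / real (card E)"
    by (simp add: sum_distrib_left sum_divide_distrib mult_ac)
  finally show ?thesis .
qed

lemma T_nonneg:
  assumes e: "e \<in> E"
  shows "(\<Sum>A\<in>Pow E. pw A * f A * (\<Sum>B\<in>Pow E. kH e A B * f B)) \<ge> 0"
proof -
  define M where "M D = al e D * f (insert e D) + (1 - al e D) * f D" for D
  define E0 where "E0 = E - {e}"
  have EE: "E = insert e E0" using e unfolding E0_def by auto
  have fE0: "finite E0" using finE unfolding E0_def by simp
  have eE0: "e \<notin> E0" unfolding E0_def by simp
  have X: "(\<Sum>B\<in>Pow E. kH e A B * f B) = M (A - {e})" if "A \<in> Pow E" for A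
  proof -
    have "al e A = al e (A - {e})" unfolding al_def by simp
    moreover have "insert e A = insert e (A - {e})" by simp
    ultimately show ?thesis using XkH[of A e f] that e unfolding M_def by simp
  qed
  have "(\<Sum>A\<in>Pow E. pw A * f A * (\<Sum>B\<in>Pow E. kH e A B * f B)) = (\<Sum>A\<in>Pow E. pw A * f A * M (A - {e}))"
    using X by (intro sum.cong refl) simp
  also have "\<dots> = (\<Sum>A\<in>Pow E0. pw A * f A * M (A - {e})) + (\<Sum>A\<in>insert e ` Pow E0. pw A * f A * M (A - {e}))"
    unfolding EE Pow_insert using fE0 eE0 by (intro sum.union_disjoint) auto
  also have "(\<Sum>A\<in>insert e ` Pow E0. pw A * f A * M (A - {e})) = (\<Sum>D\<in>Pow E0. pw (insert e D) * f (insert e D) * M (insert e D - {e}))"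
  proof (rule sum.reindex[unfolded comp_def])
    show "inj_on (insert e) (Pow E0)" using eE0 unfolding inj_on_def by (metis PowD insert_ident subsetD)
  qed
  also have "(\<Sum>A\<in>Pow E0. pw A * f A * M (A - {e})) + (\<Sum>D\<in>Pow E0. pw (insert e D) * f (insert e D) * M (insert e D - {e}))
      = (\<Sum>D\<in>Pow E0. pw D / (1 - al e D) * (M D)^2)"
    unfolding sum.distrib[symmetric]
  proof (intro sum.cong refl)
    fix D assume D: "D \<in> Pow E0"
    have eD: "e \<notin> D" using D eE0 by auto
    have DE: "D \<subseteq> E" using D EE by auto
    have d1: "D - {e} = D" "insert e D - {e} = D" using eD by auto
    have z: "1 - al e D \<noteq> 0" using al_bounds[of e D] by simp
    show "pw D * f D * M (D - {e}) + pw (insert e D) * f (insert e D) * M (insert e D - {e}) = pw D / (1 - al e D) * (M D)^2"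
      unfolding d1 pw_ins_al[OF DE e eD] using z unfolding M_def by (simp add: field_simps power2_eq_square)
  qed
  also have "\<dots> \<ge> 0"
    using al_bounds pw_pos by (intro sum_nonneg mult_nonneg_nonneg divide_nonneg_pos) (auto simp: less_imp_le)
  finally show ?thesis .
qed

lemma psd_H: "ip (Pow E) pw f (app (Pow E) H f) \<ge> 0"
proof -
  have "(\<Sum>e\<in>E. \<Sum>A\<in>Pow E. pw A * f A * (\<Sum>B\<in>Pow E. kH e A B * f B)) \<ge> 0"
    by (rule sum_nonneg) (rule T_nonneg)
  then show ?thesis unfolding Q_H_split using cardE by simp
qed

lemma H00: "H {} {} \<noteq> 1"
proof -
  have "kH e {} {} = 1 - al e {}" for e unfolding kH_def by auto
  then have "(\<Sum>e\<in>E. kH e {} {}) < (\<Sum>e\<in>E. 1)"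
    using al_bounds finE Ene by (intro sum_strict_mono) auto
  then show ?thesis unfolding H_eq using cardE by simp
qed

lemma G00: "G {} {} \<noteq> 1"
proof -
  have "kG e {} {} = 1 - be e {}" for e unfolding kG_def by auto
  then have "(\<Sum>e\<in>E. kG e {} {}) < (\<Sum>e\<in>E. 1)"
    using be_bounds finE Ene by (intro sum_strict_mono) auto
  then show ?thesis unfolding G_eq using cardE by simp
qed

definition cc where "cc = (p + q * (1 - p)) / q"

lemma cc_bounds: "0 < cc" "cc \<le> 1"
  unfolding cc_def using Dpos Dleq q1 by auto

lemma kcomp:
  assumes "A \<noteq> B"
  shows "cc * kH e A B \<le> kG e A B \<and> kG e A B \<le> kH e A B"
proof -
  have qn: "q \<noteq> 0" using q1 by simp
  have Dn: "p + q * (1 - p) \<noteq> 0" using Dpos by simp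
  consider "B = insert e A" "e \<notin> A" | "B = A - {e}" "e \<in> A" | "B \<noteq> insert e A" "B \<noteq> A - {e}"
    using assms by blast
  then show ?thesis
  proof cases
    case 1
    then have k: "kH e A B = al e A" "kG e A B = be e A" unfolding kH_def kG_def by auto
    have Ae: "A - {e} = A" using 1 by auto
    show ?thesis
    proof (cases "cn A (end1 e) (end2 e)")
      case True
      then show ?thesis unfolding k al_def be_def Ae using cc_bounds p0
        by (simp add: mult_le_cancel_right1 less_imp_le)
    next
      case False
      have e1: "cc * (p / (p + q * (1 - p))) = p / q" unfolding cc_def using Dn qn by simp
      have e2: "p / q \<le> p / (p + q * (1 - p))" using p0 Dpos Dleq by (intro divide_left_mono) auto
      show ?thesis unfolding k al_def be_def Ae using False e1 e2 by simp
    qed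
  next
    case 2
    then have k: "kH e A B = 1 - al e A" "kG e A B = 1 - p"
      unfolding kH_def kG_def be_def using cn_edge[of e A] by auto
    show ?thesis
    proof (cases "cn (A - {e}) (end1 e) (end2 e)")
      case True
      then show ?thesis unfolding k al_def using cc_bounds p1
        by (simp add: mult_le_cancel_right1 less_imp_le)
    next
      case False
      have r: "1 - p / (p + q * (1 - p)) = q * (1 - p) / (p + q * (1 - p))"
      proof -
        have "q * (1 - p) / (p + q * (1 - p)) = ((p + q * (1 - p)) - p) / (p + q * (1 - p))" by simp
        also have "\<dots> = (p + q * (1 - p)) / (p + q * (1 - p)) - p / (p + q * (1 - p))"
          by (rule diff_divide_distrib)
        also have "(p + q * (1 - p)) / (p + q * (1 - p)) = 1" using Dpos by simp
        finally show ?thesis by simp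
      qed
      have e1: "cc * (q * (1 - p) / (p + q * (1 - p))) = 1 - p" unfolding cc_def using Dn qn by simp
      have e2: "1 - p \<le> q * (1 - p) / (p + q * (1 - p))"
      proof -
        have "(1 - p) * (p + q * (1 - p)) \<le> (1 - p) * q" using Dleq p1 by (intro mult_left_mono) auto
        then show ?thesis using Dpos by (simp add: le_divide_eq mult_ac)
      qed
      have kk: "kH e A B = q * (1 - p) / (p + q * (1 - p))" using k(1) False r unfolding al_def by simp
      show ?thesis unfolding kk k(2) using e1 e2 by linarith
    qed
  next
    case 3
    then have "kH e A B = 0" "kG e A B = 0" unfolding kH_def kG_def by auto
    then show ?thesis by simp
  qed
qed

lemma Hcomp:
  assumes "A \<noteq> B"
  shows "cc * H A B \<le> G A B" "G A B \<le> H A B"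
proof -
  have "cc * (\<Sum>e\<in>E. kH e A B) \<le> (\<Sum>e\<in>E. kG e A B)"
    unfolding sum_distrib_left using kcomp[OF assms] by (intro sum_mono) auto
  then show "cc * H A B \<le> G A B" unfolding H_eq G_eq using cardE by (simp add: divide_right_mono)
  have "(\<Sum>e\<in>E. kG e A B) \<le> (\<Sum>e\<in>E. kH e A B)"
    using kcomp[OF assms] by (intro sum_mono) auto
  then show "G A B \<le> H A B" unfolding H_eq G_eq using cardE by (simp add: divide_right_mono)
qed


lemma final: "cc * spectral_gap E H \<le> spectral_gap E G \<and> spectral_gap E G \<le> spectral_gap E H"
proof -
  interpret hH: rc "Pow E" pw H by (rule rc_H)
  interpret gG: rc "Pow E" pw G by (rule rc_G)
  have sqz: "(f A - f B)^2 = 0" if "A = B" for f :: "'e set \<Rightarrow> real" and A B using that by simp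
  have dc1: "cc * hH.dir f \<le> gG.dir f" for f
  proof -
    have "cc * (\<Sum>A\<in>Pow E. \<Sum>B\<in>Pow E. pw A * H A B * (f A - f B)^2) \<le> (\<Sum>A\<in>Pow E. \<Sum>B\<in>Pow E. pw A * G A B * (f A - f B)^2)"
      unfolding sum_distrib_left
    proof (intro sum_mono)
      fix A B
      show "cc * (pw A * H A B * (f A - f B)^2) \<le> pw A * G A B * (f A - f B)^2"
      proof (cases "A = B")
        case True then show ?thesis by simp
      next
        case False
        have "pw A * (f A - f B)^2 * (cc * H A B) \<le> pw A * (f A - f B)^2 * G A B"
          using Hcomp(1)[OF False] pw_pos[of A] by (intro mult_left_mono) auto
        then show ?thesis by (simp add: mult_ac)
      qed
    qed
    then show ?thesis unfolding hH.dir_formula gG.dir_formula by simp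
  qed
  have dc2: "gG.dir f \<le> hH.dir f" for f
  proof -
    have "(\<Sum>A\<in>Pow E. \<Sum>B\<in>Pow E. pw A * G A B * (f A - f B)^2) \<le> (\<Sum>A\<in>Pow E. \<Sum>B\<in>Pow E. pw A * H A B * (f A - f B)^2)"
    proof (intro sum_mono)
      fix A B
      show "pw A * G A B * (f A - f B)^2 \<le> pw A * H A B * (f A - f B)^2"
      proof (cases "A = B")
        case True then show ?thesis by simp
      next
        case False
        have "pw A * (f A - f B)^2 * G A B \<le> pw A * (f A - f B)^2 * H A B"
          using Hcomp(2)[OF False] pw_pos[of A] by (intro mult_left_mono) auto
        then show ?thesis by (simp add: mult_ac)
      qed
    qed
    then show ?thesis unfolding hH.dir_formula gG.dir_formula by simp
  qed
  have psd_G: "ip (Pow E) pw f (app (Pow E) G f) \<ge> 0" for f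
    using dc2[of f] psd_H[of f] unfolding hH.dir_def gG.dir_def by linarith
  have NN: "hH.Nset = gG.Nset"
  proof -
    have "hH.dir f = 0 \<longleftrightarrow> gG.dir f = 0" for f
      using dc1[of f] dc2[of f] hH.dir_nonneg[of f] gG.dir_nonneg[of f] cc_bounds
      by (smt (verit) mult_pos_pos)
    then show ?thesis unfolding hH.Nset_def gG.Nset_def using hH.dir_zero_iff gG.dir_zero_iff by blast
  qed
  have e0: "{} \<in> Pow E" by simp
  obtain xH where xH: "Max {cmod z | z. hH.cev z \<and> z \<noteq> 1} = xH"
    and fH: "\<exists>f. (\<forall>n\<in>hH.Nset. ip (Pow E) pw f n = 0) \<and> ip (Pow E) pw f f > 0 \<and> ip (Pow E) pw f (app (Pow E) H f) = xH * ip (Pow E) pw f f"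
    and allH: "\<forall>f. (\<forall>n\<in>hH.Nset. ip (Pow E) pw f n = 0) \<longrightarrow> ip (Pow E) pw f (app (Pow E) H f) \<le> xH * ip (Pow E) pw f f"
    using hH.gen[OF psd_H e0 H00] by blast
  obtain xG where xG: "Max {cmod z | z. gG.cev z \<and> z \<noteq> 1} = xG"
    and fG: "\<exists>f. (\<forall>n\<in>gG.Nset. ip (Pow E) pw f n = 0) \<and> ip (Pow E) pw f f > 0 \<and> ip (Pow E) pw f (app (Pow E) G f) = xG * ip (Pow E) pw f f"
    and allG: "\<forall>f. (\<forall>n\<in>gG.Nset. ip (Pow E) pw f n = 0) \<longrightarrow> ip (Pow E) pw f (app (Pow E) G f) \<le> xG * ip (Pow E) pw f f"
    using gG.gen[OF psd_G e0 G00] by blast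
  have gapH: "spectral_gap E H = 1 - xH"
    unfolding spectral_gap_def is_eigenvalue_def xH[symmetric] hH.cev_def ..
  have gapG: "spectral_gap E G = 1 - xG"
    unfolding spectral_gap_def is_eigenvalue_def xG[symmetric] gG.cev_def ..
  have i1: "xH \<le> xG"
  proof -
    from fH obtain f where f: "\<forall>n\<in>hH.Nset. ip (Pow E) pw f n = 0" "ip (Pow E) pw f f > 0"
      "ip (Pow E) pw f (app (Pow E) H f) = xH * ip (Pow E) pw f f" by blast
    have "ip (Pow E) pw f (app (Pow E) G f) \<le> xG * ip (Pow E) pw f f" using allG f(1) NN by blast
    moreover have "ip (Pow E) pw f (app (Pow E) H f) \<le> ip (Pow E) pw f (app (Pow E) G f)"
      using dc2[of f] unfolding hH.dir_def gG.dir_def by linarith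
    ultimately have "xH * ip (Pow E) pw f f \<le> xG * ip (Pow E) pw f f" using f(3) by linarith
    then show ?thesis using f(2) by (simp add: mult_le_cancel_right)
  qed
  have i2: "cc * (1 - xH) \<le> 1 - xG"
  proof -
    from fG obtain f where f: "\<forall>n\<in>gG.Nset. ip (Pow E) pw f n = 0" "ip (Pow E) pw f f > 0"
      "ip (Pow E) pw f (app (Pow E) G f) = xG * ip (Pow E) pw f f" by blast
    have "ip (Pow E) pw f (app (Pow E) H f) \<le> xH * ip (Pow E) pw f f" using allH f(1) NN by blast
    then have "(1 - xH) * ip (Pow E) pw f f \<le> hH.dir f" unfolding hH.dir_def by (simp add: algebra_simps)
    then have "cc * ((1 - xH) * ip (Pow E) pw f f) \<le> cc * hH.dir f" using cc_bounds by (intro mult_left_mono) auto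
    also have "\<dots> \<le> gG.dir f" by (rule dc1)
    also have "\<dots> = (1 - xG) * ip (Pow E) pw f f" unfolding gG.dir_def f(3) by (simp add: algebra_simps)
    finally have "(cc * (1 - xH)) * ip (Pow E) pw f f \<le> (1 - xG) * ip (Pow E) pw f f" by (simp add: mult_ac)
    then show ?thesis using f(2) by (simp add: mult_le_cancel_right)
  qed
  show ?thesis unfolding gapH gapG using i1 i2 by simp
qed

end



theorem lemma2p7:
  fixes V :: "'v set" and E :: "'e set" and end1 end2 :: "'e \<Rightarrow> 'v"
    and p :: real and q :: nat
  assumes "finite V" and "finite E" and "E \<noteq> {}"
    and "\<forall>e\<in>E. end1 e \<in> V \<and> end2 e \<in> V"
    and "0 < p" and "p < 1" and "1 \<le> q"
  shows "(1 - p * (1 - 1 / real q)) * spectral_gap E (P_HB E end1 end2 p (real q))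
           \<le> spectral_gap E (P_SB E end1 end2 p (real q))
       \<and> spectral_gap E (P_SB E end1 end2 p (real q))
           \<le> spectral_gap E (P_HB E end1 end2 p (real q))"
proof -
  interpret grf2 V E end1 end2 p "real q"
    by unfold_locales (use assms in auto)
  have "cc = 1 - p * (1 - 1 / real q)"
    unfolding cc_def using assms(7) by (simp add: field_simps)
  then show ?thesis using final by simp
qed

end
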